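(* Let $N\ge 5$ be odd, and let $G_{N,1}$ be the graph with vertex set $\mathbb Z_N$ in which two distinct vertices $i,j$ are adjacent if and only if $j-i\not\equiv\pm1\pmod N$. Put $\Delta=\sqrt{N(N-4)}$ and $\rho=\frac{N-2+\Delta}{2}$. Then the number of spanning trees of $G_{N,1}$ is \[ \tau(G_{N,1})=\frac{1}{N}\,\frac{(\rho^N+1)^2}{\rho^{N-1}(\rho+1)^2}. \] *)

theory Defs
  imports Complex_Main
begin

definition edge_rel :: "'a set set \<Rightarrow> ('a \<times> 'a) set" where
  "edge_rel T = {(x, y). {x, y} \<in> T}"

definition graph_connected :: "'a set \<Rightarrow> 'a set set \<Rightarrow> bool" where
  "graph_connected V T \<longleftrightarrow> (\<forall>u\<in>V. \<forall>v\<in>V. (u, v) \<in> (edge_rel T)\<^sup>*)"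

definition has_cycle :: "'a set set \<Rightarrow> bool" where
  "has_cycle T \<longleftrightarrow> (\<exists>vs. length vs \<ge> 3 \<and> distinct vs \<and>
      (\<forall>i. Suc i < length vs \<longrightarrow> {vs ! i, vs ! Suc i} \<in> T) \<and> {last vs, hd vs} \<in> T)"

definition spanning_tree :: "'a set \<Rightarrow> 'a set set \<Rightarrow> 'a set set \<Rightarrow> bool" where
  "spanning_tree V E T \<longleftrightarrow> T \<subseteq> E \<and> graph_connected V T \<and> \<not> has_cycle T"

definition num_spanning_trees :: "'a set \<Rightarrow> 'a set set \<Rightarrow> nat" where
  "num_spanning_trees V E = card {T. spanning_tree V E T}"

definition GN1_vertices :: "nat \<Rightarrow> nat set" where
  "GN1_vertices N = {0..<N}"

definition GN1_edges :: "nat \<Rightarrow> nat set set" where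
  "GN1_edges N = {{i, j} | i j. i < N \<and> j < N \<and> i \<noteq> j \<and>
      (int j - int i) mod int N \<noteq> 1 mod int N \<and> (int j - int i) mod int N \<noteq> (-1) mod int N}"

end

theory Submission
  imports Defs "Jordan_Normal_Form.Determinant" "HOL-Library.FuncSet" "HOL-Computational_Algebra.Fundamental_Theorem_Algebra"
begin


lemma edge_rel_iff: "(x, y) \<in> edge_rel T \<longleftrightarrow> {x, y} \<in> T"
  unfolding edge_rel_def by auto

lemma edge_rel_sym: "(x, y) \<in> edge_rel T \<Longrightarrow> (y, x) \<in> edge_rel T"
  unfolding edge_rel_def by (auto simp: insert_commute)

lemma edge_rel_conv: "(edge_rel T)\<inverse> = edge_rel T"
  using edge_rel_sym by fast

lemma rtrancl_edge_rel_sym: "(x, y) \<in> (edge_rel T)\<^sup>* \<Longrightarrow> (y, x) \<in> (edge_rel T)\<^sup>*"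
  by (metis edge_rel_conv rtrancl_converseI)

lemma edge_rel_mono: "T \<subseteq> T' \<Longrightarrow> edge_rel T \<subseteq> edge_rel T'"
  unfolding edge_rel_def by auto

lemma rtrancl_path:
  assumes "(u, w) \<in> R\<^sup>*"
  shows "\<exists>vs. vs \<noteq> [] \<and> hd vs = u \<and> last vs = w \<and> distinct vs \<and>
           (\<forall>i. Suc i < length vs \<longrightarrow> (vs ! i, vs ! Suc i) \<in> R)"
  using assms
proof (induction rule: rtrancl_induct)
  case base
  then show ?case by (intro exI[of _ "[u]"]) auto
next
  case (step b c)
  then obtain vs where vs: "vs \<noteq> []" "hd vs = u" "last vs = b" "distinct vs"
    "\<forall>i. Suc i < length vs \<longrightarrow> (vs ! i, vs ! Suc i) \<in> R" by blast
  show ?case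
  proof (cases "c \<in> set vs")
    case True
    then obtain j where j: "j < length vs" "vs ! j = c" by (auto simp: in_set_conv_nth)
    show ?thesis
    proof (intro exI[of _ "take (Suc j) vs"] conjI allI impI)
      show "take (Suc j) vs \<noteq> []" using vs(1) by simp
      show "hd (take (Suc j) vs) = u" using vs(1,2) by (simp add: hd_take)
      have "length (take (Suc j) vs) = Suc j" using j by simp
      then have "last (take (Suc j) vs) = take (Suc j) vs ! j" by (subst last_conv_nth) auto
      then show "last (take (Suc j) vs) = c" using j by simp
      show "distinct (take (Suc j) vs)" using vs(4) by simp
      fix i assume "Suc i < length (take (Suc j) vs)"
      then show "(take (Suc j) vs ! i, take (Suc j) vs ! Suc i) \<in> R" using vs(5) by simp
    qed
  next
    case False
    show ?thesis
    proof (intro exI[of _ "vs @ [c]"] conjI allI impI)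
      show "vs @ [c] \<noteq> []" by simp
      show "hd (vs @ [c]) = u" using vs by simp
      show "last (vs @ [c]) = c" by simp
      show "distinct (vs @ [c])" using vs False by simp
      fix i assume i: "Suc i < length (vs @ [c])"
      show "((vs @ [c]) ! i, (vs @ [c]) ! Suc i) \<in> R"
      proof (cases "Suc i < length vs")
        case True
        then show ?thesis using vs(5) by (simp add: nth_append)
      next
        case False
        with i have "Suc i = length vs" by simp
        then have "vs ! i = b" using vs(1,3) by (metis diff_Suc_1 last_conv_nth)
        then show ?thesis using \<open>Suc i = length vs\<close> step(2) by (simp add: nth_append)
      qed
    qed
  qed
qed

lemma cycle_from_path:
  assumes uv: "{u, v} \<in> T" "u \<noteq> v" and p: "(u, v) \<in> (edge_rel (T - {{u, v}}))\<^sup>*"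
  shows "has_cycle T"
proof -
  obtain vs where vs: "vs \<noteq> []" "hd vs = u" "last vs = v" "distinct vs"
    "\<forall>i. Suc i < length vs \<longrightarrow> (vs ! i, vs ! Suc i) \<in> edge_rel (T - {{u, v}})"
    using rtrancl_path[OF p] by blast
  have "length vs \<noteq> 1"
    using vs uv(2) by (metis One_nat_def last_conv_nth hd_conv_nth diff_Suc_1 zero_less_one)
  moreover have "length vs \<noteq> 2"
  proof
    assume l: "length vs = 2"
    have "vs ! 0 = u" using vs by (simp add: hd_conv_nth)
    moreover have "vs ! 1 = v" using vs l by (simp add: last_conv_nth)
    ultimately show False using vs(5) l by (auto simp: edge_rel_iff)
  qed
  moreover have "length vs \<noteq> 0" using vs(1) by simp
  ultimately have "length vs \<ge> 3" by presburger
  moreover have "\<forall>i. Suc i < length vs \<longrightarrow> {vs ! i, vs ! Suc i} \<in> T"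
    using vs(5) by (auto simp: edge_rel_iff)
  moreover have "{last vs, hd vs} \<in> T" using vs uv by (simp add: insert_commute)
  ultimately show ?thesis unfolding has_cycle_def using vs(4) by blast
qed

lemma edge_from_cycle:
  assumes "has_cycle T"
  shows "\<exists>u v. {u, v} \<in> T \<and> u \<noteq> v \<and> (u, v) \<in> (edge_rel (T - {{u, v}}))\<^sup>*"
proof -
  obtain vs where vs: "length vs \<ge> 3" "distinct vs"
    "\<forall>i. Suc i < length vs \<longrightarrow> {vs ! i, vs ! Suc i} \<in> T" "{last vs, hd vs} \<in> T"
    using assms unfolding has_cycle_def by blast
  define k where "k = length vs"
  have ne: "vs \<noteq> []" using vs(1) by auto
  have hd: "hd vs = vs ! 0" using ne by (simp add: hd_conv_nth)
  have lst: "last vs = vs ! (k - 1)" using ne by (simp add: last_conv_nth k_def)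
  have uv: "vs ! 0 \<noteq> vs ! (k - 1)"
    using vs(1,2) unfolding k_def by (subst nth_eq_iff_index_eq) auto
  have T: "{vs ! 0, vs ! (k - 1)} \<in> T" using vs(4) hd lst by (simp add: insert_commute)
  have "\<forall>i < k. (vs ! 0, vs ! i) \<in> (edge_rel (T - {{vs ! 0, vs ! (k - 1)}}))\<^sup>*"
  proof (intro allI impI)
    fix i assume "i < k"
    then show "(vs ! 0, vs ! i) \<in> (edge_rel (T - {{vs ! 0, vs ! (k - 1)}}))\<^sup>*"
    proof (induction i)
      case 0 then show ?case by simp
    next
      case (Suc i)
      have e: "{vs ! i, vs ! Suc i} \<in> T" using vs(3) Suc.prems k_def by simp
      have ne: "{vs ! i, vs ! Suc i} \<noteq> {vs ! 0, vs ! (k - 1)}"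
      proof
        assume "{vs ! i, vs ! Suc i} = {vs ! 0, vs ! (k - 1)}"
        then have "(vs ! i = vs ! 0 \<and> vs ! Suc i = vs ! (k - 1)) \<or> (vs ! i = vs ! (k - 1) \<and> vs ! Suc i = vs ! 0)"
          by (simp add: doubleton_eq_iff)
        moreover have "i < length vs" "Suc i < length vs" "0 < length vs" "k - 1 < length vs"
          using Suc.prems vs(1) k_def by auto
        ultimately have "(i = 0 \<and> Suc i = k - 1) \<or> (i = k - 1 \<and> Suc i = 0)"
          using vs(2) by (metis nth_eq_iff_index_eq)
        then show False using vs(1) k_def by auto
      qed
      have "(vs ! i, vs ! Suc i) \<in> edge_rel (T - {{vs ! 0, vs ! (k - 1)}})"
        using e ne by (simp add: edge_rel_iff)
      then show ?case using Suc by (meson Suc_lessD rtrancl.rtrancl_into_rtrancl)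
    qed
  qed
  then have "(vs ! 0, vs ! (k - 1)) \<in> (edge_rel (T - {{vs ! 0, vs ! (k - 1)}}))\<^sup>*"
    using vs(1) k_def by simp
  then show ?thesis using T uv by blast
qed



definition acyc :: "nat \<Rightarrow> (nat \<Rightarrow> nat) \<Rightarrow> bool" where
  "acyc n f \<longleftrightarrow> (\<forall>S. S \<subseteq> {0..<n} \<longrightarrow> S \<noteq> {} \<longrightarrow> (\<exists>x\<in>S. f x \<notin> S))"

definition Phi :: "nat \<Rightarrow> (nat \<Rightarrow> nat) \<Rightarrow> nat set set" where
  "Phi n f = (\<lambda>i. {i, f i}) ` {0..<n}"

definition Fs :: "nat \<Rightarrow> nat set set \<Rightarrow> (nat \<Rightarrow> nat) set" where
  "Fs n E = {f \<in> PiE {0..<n} (\<lambda>i. {0..<Suc n} - {i}). (\<forall>i<n. {i, f i} \<in> E) \<and> acyc n f}"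

lemma acycD: "acyc n f \<Longrightarrow> S \<subseteq> {0..<n} \<Longrightarrow> x \<in> S \<Longrightarrow> (\<forall>y\<in>S. f y \<in> S) \<Longrightarrow> False"
  unfolding acyc_def by blast

lemma Phi_root:
  assumes f: "\<forall>i<n. f i \<in> {0..<Suc n} - {i}" and ac: "acyc n f" and i: "i < Suc n"
  shows "(i, n) \<in> (edge_rel (Phi n f))\<^sup>*"
proof -
  let ?R = "edge_rel (Phi n f)"
  let ?S = "{i. i < n \<and> (i, n) \<notin> ?R\<^sup>*}"
  have cl: "\<forall>y\<in>?S. f y \<in> ?S"
  proof
    fix y assume y: "y \<in> ?S"
    have "y < n" using y by simp
    then have "{y, f y} \<in> Phi n f" unfolding Phi_def by (intro imageI) simp
    then have e: "(y, f y) \<in> ?R" by (simp add: edge_rel_iff)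
    have "f y < Suc n" "f y \<noteq> y" using f \<open>y < n\<close> by auto
    show "f y \<in> ?S"
    proof (cases "f y = n")
      case True
      then have "(y, n) \<in> ?R\<^sup>*" using e by (metis r_into_rtrancl)
      then show ?thesis using y by simp
    next
      case False
      then have "f y < n" using \<open>f y < Suc n\<close> by simp
      moreover have "(f y, n) \<notin> ?R\<^sup>*" using e y
        by (blast intro: converse_rtrancl_into_rtrancl)
      ultimately show ?thesis by simp
    qed
  qed
  have Ssub: "?S \<subseteq> {0..<n}" by auto
  have S0: "?S = {}"
  proof (rule equals0I)
    fix x assume "x \<in> ?S"
    from acycD[OF ac Ssub this cl] show False .
  qed
  show ?thesis
  proof (cases "i = n")
    case True then show ?thesis by simp
  next
    case False
    then have "i < n" using i by simp
    then have "i \<notin> ?S \<Longrightarrow> (i, n) \<in> ?R\<^sup>*" by simp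
    then show ?thesis using S0 by blast
  qed
qed

lemma Phi_connected:
  assumes f: "\<forall>i<n. f i \<in> {0..<Suc n} - {i}" and ac: "acyc n f"
  shows "graph_connected {0..<Suc n} (Phi n f)"
  unfolding graph_connected_def
proof (intro ballI)
  fix u v assume "u \<in> {0..<Suc n}" "v \<in> {0..<Suc n}"
  then have "(u, n) \<in> (edge_rel (Phi n f))\<^sup>*" "(v, n) \<in> (edge_rel (Phi n f))\<^sup>*"
    using Phi_root[OF f ac] by auto
  then show "(u, v) \<in> (edge_rel (Phi n f))\<^sup>*"
    using rtrancl_edge_rel_sym[of v n] rtrancl_trans[of u n _ v] by blast
qed

lemma Phi_cut:
  assumes f: "\<forall>i<n. f i \<in> {0..<Suc n} - {i}" and ac: "acyc n f" and x: "x < n"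
    and p: "(x, f x) \<in> (edge_rel (Phi n f - {{x, f x}}))\<^sup>*"
  shows False
proof -
  define R where "R = {(y, f y) | y. y < n}"
  define D where "D = {y. (y, x) \<in> R\<^sup>*}"
  have Rf: "a < n \<and> b = f a" if "(a, b) \<in> R" for a b using that unfolding R_def by auto
  have Ri: "(a, f a) \<in> R" if "a < n" for a using that unfolding R_def by auto
  have fx: "f x \<noteq> x" using f x by auto
  have stp: "(f w, x) \<in> R\<^sup>*" if "(w, x) \<in> R\<^sup>*" "w \<noteq> x" for w
    using that by (metis Rf converse_rtranclE)
  have closed: "b \<in> D" if "(a, b) \<in> (edge_rel (Phi n f - {{x, f x}}))\<^sup>*" "a \<in> D" for a b
    using that(1)
  proof (induction rule: rtrancl_induct)
    case base show ?case using that(2) .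
  next
    case (step y z)
    have yz: "{y, z} \<in> Phi n f" "{y, z} \<noteq> {x, f x}" using step(2) by (auto simp: edge_rel_iff)
    from yz(1) obtain w where w00: "w \<in> {0..<n}" "{y, z} = {w, f w}" unfolding Phi_def by (rule imageE)
    then have w0: "w < n" "{y, z} = {w, f w}" by auto
    with yz have w: "w < n" "{y, z} = {w, f w}" "{w, f w} \<noteq> {x, f x}" by auto
    have "w \<noteq> x" using w(3) by auto
    from w(2) have "(y = w \<and> z = f w) \<or> (y = f w \<and> z = w)" by (auto simp: doubleton_eq_iff)
    then show ?case
    proof
      assume "y = w \<and> z = f w" then show ?thesis using step.IH \<open>w \<noteq> x\<close> stp unfolding D_def by auto
    next
      assume "y = f w \<and> z = w" then show ?thesis using step.IH Ri[OF w(1)] unfolding D_def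
        by (auto intro: converse_rtrancl_into_rtrancl)
    qed
  qed
  have "f x \<in> D" using closed[OF p] unfolding D_def by simp
  then have fxx: "(f x, x) \<in> R\<^sup>*" unfolding D_def by simp
  define S where "S = {y. (x, y) \<in> R\<^sup>* \<and> (y, x) \<in> R\<^sup>*}"
  have "S \<subseteq> {0..<n}"
  proof
    fix y assume "y \<in> S"
    then have "(y, x) \<in> R\<^sup>*" unfolding S_def by simp
    then show "y \<in> {0..<n}" using x by (cases rule: converse_rtranclE) (auto dest: Rf)
  qed
  moreover have "x \<in> S" unfolding S_def by simp
  moreover have "\<forall>y\<in>S. f y \<in> S"
  proof
    fix y assume y: "y \<in> S"
    then have "y < n" using \<open>S \<subseteq> {0..<n}\<close> by auto
    have "(x, f y) \<in> R\<^sup>*" using y Ri[OF \<open>y < n\<close>] unfolding S_def by auto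
    moreover have "(f y, x) \<in> R\<^sup>*"
      using y fxx stp unfolding S_def by (cases "y = x") auto
    ultimately show "f y \<in> S" unfolding S_def by simp
  qed
  ultimately show False by (rule acycD[OF ac])
qed

lemma Phi_acyclic:
  assumes f: "\<forall>i<n. f i \<in> {0..<Suc n} - {i}" and ac: "acyc n f"
  shows "\<not> has_cycle (Phi n f)"
proof
  assume "has_cycle (Phi n f)"
  then obtain u v where uv: "{u, v} \<in> Phi n f" "u \<noteq> v" "(u, v) \<in> (edge_rel (Phi n f - {{u, v}}))\<^sup>*"
    using edge_from_cycle by blast
  from uv(1) obtain x where x0: "x \<in> {0..<n}" "{u, v} = {x, f x}" unfolding Phi_def by (rule imageE)
  have x: "x < n" using x0 by simp
  have uv3: "(u, v) \<in> (edge_rel (Phi n f - {{x, f x}}))\<^sup>*" using uv(3) x0(2) by simp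
  have "(u = x \<and> v = f x) \<or> (u = f x \<and> v = x)" using x0(2) by (simp add: doubleton_eq_iff)
  then have "(x, f x) \<in> (edge_rel (Phi n f - {{x, f x}}))\<^sup>*"
  proof
    assume "u = x \<and> v = f x" then show ?thesis using uv3 by simp
  next
    assume "u = f x \<and> v = x" then show ?thesis using uv3 rtrancl_edge_rel_sym by simp
  qed
  then show False by (rule Phi_cut[OF f ac x])
qed

lemma Fs_tree:
  assumes "f \<in> Fs n E"
  shows "spanning_tree {0..<Suc n} E (Phi n f)"
proof -
  have f: "\<forall>i<n. f i \<in> {0..<Suc n} - {i}" and ac: "acyc n f" and e: "\<forall>i<n. {i, f i} \<in> E"
    using assms unfolding Fs_def by (auto simp: PiE_iff)
  have "Phi n f \<subseteq> E" using e unfolding Phi_def by auto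
  then show ?thesis unfolding spanning_tree_def using Phi_connected[OF f ac] Phi_acyclic[OF f ac] by simp
qed

lemma Fs_inj: "inj_on (Phi n) (Fs n E)"
proof (rule inj_onI)
  fix f g assume fF: "f \<in> Fs n E" and gF: "g \<in> Fs n E" and eq: "Phi n f = Phi n g"
  have acg: "acyc n g" using gF unfolding Fs_def by auto
  have g: "\<forall>i<n. g i \<in> {0..<Suc n} - {i}" using gF unfolding Fs_def by (auto simp: PiE_iff)
  define K where "K = {x. x < n \<and> f x \<noteq> g x}"
  have clK: "\<forall>x\<in>K. g x \<in> K"
  proof
    fix x assume xK: "x \<in> K"
    have "{x, g x} \<in> Phi n f" using eq xK unfolding K_def Phi_def by auto
    then obtain y where y: "y < n" "{x, g x} = {y, f y}" unfolding Phi_def by auto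
    then have "(x = y \<and> g x = f y) \<or> (x = f y \<and> g x = y)" by (auto simp: doubleton_eq_iff)
    then have gx: "g x = y" "f y = x" using xK unfolding K_def by auto
    have "g y \<noteq> f y"
    proof
      assume "g y = f y"
      then have "g (g x) = x" using gx by simp
      moreover have "{x, g x} \<subseteq> {0..<n}" using xK gx y unfolding K_def by auto
      moreover have "\<forall>z\<in>{x, g x}. g z \<in> {x, g x}" using calculation by auto
      ultimately show False using acycD[OF acg, of "{x, g x}" x] by blast
    qed
    then show "g x \<in> K" using gx y unfolding K_def by auto
  qed
  have Ksub: "K \<subseteq> {0..<n}" unfolding K_def by auto
  have "K = {}"
  proof (rule equals0I)
    fix x assume "x \<in> K"
    from acycD[OF acg Ksub this clK] show False .
  qed
  then have "\<forall>x<n. f x = g x" unfolding K_def by auto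
  moreover have "f \<in> extensional {0..<n}" "g \<in> extensional {0..<n}"
    using fF gF unfolding Fs_def by (auto simp: PiE_iff)
  ultimately show "f = g" by (intro extensionalityI) auto
qed

lemma tree_Fs:
  assumes hE: "\<forall>e\<in>E. \<exists>a b. e = {a, b} \<and> a < Suc n \<and> b < Suc n \<and> a \<noteq> b"
    and T: "spanning_tree {0..<Suc n} E T"
  shows "T \<in> Phi n ` Fs n E"
proof -
  let ?R = "edge_rel T"
  have TE: "T \<subseteq> E" and con: "graph_connected {0..<Suc n} T" and nc: "\<not> has_cycle T"
    using T unfolding spanning_tree_def by auto
  define dist where "dist i = (LEAST k. (i, n) \<in> ?R ^^ k)" for i
  have dist: "(i, n) \<in> ?R ^^ dist i" if "i < Suc n" for i
  proof -
    have "(i, n) \<in> ?R\<^sup>*" using con that unfolding graph_connected_def by auto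
    then have "\<exists>k. (i, n) \<in> ?R ^^ k" by (simp add: rtrancl_power)
    then show ?thesis unfolding dist_def by (rule LeastI_ex)
  qed
  have ex: "\<exists>j. (i, j) \<in> ?R \<and> dist j < dist i" if "i < n" for i
  proof -
    have d: "(i, n) \<in> ?R ^^ dist i" using dist that by simp
    have "dist i \<noteq> 0" using d that by (intro notI) simp
    then obtain m where m: "dist i = Suc m" by (cases "dist i") auto
    then obtain j where j: "(i, j) \<in> ?R" "(j, n) \<in> ?R ^^ m" using d m by (metis relpow_Suc_E2)
    have "dist j \<le> m" unfolding dist_def using j(2) by (rule Least_le)
    then show ?thesis using j m by auto
  qed
  define f where "f i = (if i < n then (SOME j. (i, j) \<in> ?R \<and> dist j < dist i) else undefined)" for i
  have fi: "(i, f i) \<in> ?R \<and> dist (f i) < dist i" if "i < n" for i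
    unfolding f_def using that someI_ex[OF ex[OF that]] by simp
  have fE: "{i, f i} \<in> T" if "i < n" for i using fi[OF that] by (simp add: edge_rel_iff)
  have frange: "f i \<in> {0..<Suc n} - {i}" if i: "i < n" for i
  proof -
    have "{i, f i} \<in> E" using fE[OF i] TE by blast
    from hE[rule_format, OF this] obtain a b where "{i, f i} = {a, b}" "a < Suc n" "b < Suc n" "a \<noteq> b"
      by blast
    then show ?thesis by (auto simp: doubleton_eq_iff)
  qed
  have ac: "acyc n f" unfolding acyc_def
  proof (intro allI impI)
    fix S assume S: "S \<subseteq> {0..<n}" "S \<noteq> {}"
    show "\<exists>x\<in>S. f x \<notin> S"
    proof (rule ccontr)
      assume "\<not> (\<exists>x\<in>S. f x \<notin> S)"
      then have cl: "\<forall>x\<in>S. f x \<in> S" by blast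
      obtain y0 where "y0 \<in> S" using S by auto
      then obtain y where y: "y \<in> S" "\<forall>z. z \<in> S \<longrightarrow> dist y \<le> dist z"
        using ex_has_least_nat[of "\<lambda>z. z \<in> S" y0 dist] by blast
      have "f y \<in> S" using cl y by auto
      moreover have "dist (f y) < dist y" using fi y S by auto
      ultimately show False using y(2) by (meson not_le)
    qed
  qed
  have "f \<in> extensional {0..<n}" unfolding extensional_def f_def by simp
  then have "f \<in> PiE {0..<n} (\<lambda>i. {0..<Suc n} - {i})" using frange by (simp add: PiE_iff)
  moreover have "\<forall>i<n. {i, f i} \<in> E" using fE TE by blast
  ultimately have fF: "f \<in> Fs n E"
    unfolding Fs_def using ac by simp
  have sub: "Phi n f \<subseteq> T" using fE unfolding Phi_def by auto
  have "T \<subseteq> Phi n f"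
  proof
    fix e assume eT: "e \<in> T"
    have "e \<in> E" using eT TE by blast
    from hE[rule_format, OF this] obtain u v where uv: "e = {u, v}" "u < Suc n" "v < Suc n" "u \<noteq> v"
      by blast
    show "e \<in> Phi n f"
    proof (rule ccontr)
      assume "e \<notin> Phi n f"
      then have "Phi n f \<subseteq> T - {{u, v}}" using sub uv by auto
      have "(u, v) \<in> (edge_rel (Phi n f))\<^sup>*"
        using Phi_connected[of n f] frange ac uv unfolding graph_connected_def by auto
      also have "\<dots> \<subseteq> (edge_rel (T - {{u, v}}))\<^sup>*"
        by (rule rtrancl_mono[OF edge_rel_mono]) fact
      finally have "(u, v) \<in> (edge_rel (T - {{u, v}}))\<^sup>*" .
      then have "has_cycle T" using cycle_from_path[of u v T] eT uv by simp
      then show False using nc by simp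
    qed
  qed
  with sub fF show ?thesis by auto
qed

lemma card_spanning_trees_Fs:
  assumes hE: "\<forall>e\<in>E. \<exists>a b. e = {a, b} \<and> a < Suc n \<and> b < Suc n \<and> a \<noteq> b"
  shows "card {T. spanning_tree {0..<Suc n} E T} = card (Fs n E)"
proof -
  have "Phi n ` Fs n E = {T. spanning_tree {0..<Suc n} E T}"
  proof (rule subset_antisym)
    show "Phi n ` Fs n E \<subseteq> {T. spanning_tree {0..<Suc n} E T}"
      using Fs_tree by (intro image_subsetI) simp
    show "{T. spanning_tree {0..<Suc n} E T} \<subseteq> Phi n ` Fs n E"
      using tree_Fs[OF hE] by (intro subsetI) simp
  qed
  then have "bij_betw (Phi n) (Fs n E) {T. spanning_tree {0..<Suc n} E T}"
    using Fs_inj unfolding bij_betw_def by blast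
  then show ?thesis by (metis bij_betw_same_card)
qed



definition adj :: "nat set set \<Rightarrow> nat \<Rightarrow> nat \<Rightarrow> complex" where
  "adj E i j = (if {i, j} \<in> E then 1 else 0)"

definition lapl :: "nat \<Rightarrow> nat set set \<Rightarrow> complex mat" where
  "lapl n E = mat n n (\<lambda>(i, k). \<Sum>j\<in>{0..<Suc n} - {i}.
      adj E i j * ((if i = k then 1 else 0) - (if j = k then 1 else 0)))"

definition fmat :: "nat \<Rightarrow> (nat \<Rightarrow> nat) \<Rightarrow> complex mat" where
  "fmat n f = mat n n (\<lambda>(i, k). (if i = k then 1 else 0) - (if f i = k then 1 else 0))"

lemma det_fmat_def: "det (fmat n f) = (\<Sum>p\<in>{p. p permutes {0..<n}}. signof p *
    (\<Prod>i = 0..<n. (if i = p i then 1 else 0) - (if f i = p i then 1 else 0)))"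
proof -
  have "det (fmat n f) = (\<Sum>p\<in>{p. p permutes {0..<n}}. signof p * (\<Prod>i = 0..<n. fmat n f $$ (i, p i)))"
    by (rule det_def') (simp add: fmat_def)
  also have "\<dots> = (\<Sum>p\<in>{p. p permutes {0..<n}}. signof p *
    (\<Prod>i = 0..<n. (if i = p i then 1 else 0) - (if f i = p i then 1 else 0)))"
    by (intro sum.cong refl arg_cong2[where f="(*)"] prod.cong)
       (auto simp: fmat_def permutes_in_image)
  finally show ?thesis .
qed

lemma det_lapl_expand:
  "det (lapl n E) = (\<Sum>f\<in>PiE {0..<n} (\<lambda>i. {0..<Suc n} - {i}).
      (\<Prod>i = 0..<n. adj E i (f i)) * det (fmat n f))"
proof -
  let ?B = "\<lambda>i. {0..<Suc n} - {i}"
  let ?P = "{p. p permutes {0..<n}}"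
  let ?F = "PiE {0..<n} ?B"
  let ?d = "\<lambda>p i j. ((if i = p i then 1 else 0) - (if j = p i then 1 else 0)) :: complex"
  have "det (lapl n E) = (\<Sum>p\<in>?P. signof p * (\<Prod>i = 0..<n. lapl n E $$ (i, p i)))"
    by (rule det_def') (simp add: lapl_def)
  also have "\<dots> = (\<Sum>p\<in>?P. signof p * (\<Prod>i = 0..<n. \<Sum>j\<in>?B i. adj E i j * ?d p i j))"
    by (intro sum.cong refl arg_cong2[where f="(*)"] prod.cong)
       (auto simp: lapl_def permutes_in_image)
  also have "\<dots> = (\<Sum>p\<in>?P. signof p * (\<Sum>f\<in>?F. \<Prod>i = 0..<n. adj E i (f i) * ?d p i (f i)))"
    by (subst prod_sum_PiE) auto
  also have "\<dots> = (\<Sum>p\<in>?P. \<Sum>f\<in>?F. (\<Prod>i = 0..<n. adj E i (f i)) * (signof p * (\<Prod>i = 0..<n. ?d p i (f i))))"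
    by (simp add: sum_distrib_left prod.distrib mult_ac)
  also have "\<dots> = (\<Sum>f\<in>?F. \<Sum>p\<in>?P. (\<Prod>i = 0..<n. adj E i (f i)) * (signof p * (\<Prod>i = 0..<n. ?d p i (f i))))"
    by (rule sum.swap)
  also have "\<dots> = (\<Sum>f\<in>?F. (\<Prod>i = 0..<n. adj E i (f i)) * det (fmat n f))"
    by (simp add: det_fmat_def sum_distrib_left)
  finally show ?thesis .
qed

lemma det_fmat_acyc:
  assumes f: "\<forall>i<n. f i \<noteq> i" and ac: "acyc n f"
  shows "det (fmat n f) = 1"
proof -
  let ?P = "{p. p permutes {0..<n}}"
  let ?g = "\<lambda>p. signof p * (\<Prod>i = 0..<n. (if i = p i then 1 else 0) - (if f i = p i then 1 else 0)) :: complex"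
  have z: "?g p = 0" if p: "p \<in> ?P - {id}" for p
  proof (rule ccontr)
    assume nz: "?g p \<noteq> 0"
    have pp: "p permutes {0..<n}" "p \<noteq> id" using p by auto
    have fac: "p i = i \<or> f i = p i" if "i \<in> {0..<n}" for i
    proof (rule ccontr)
      assume "\<not> (p i = i \<or> f i = p i)"
      then have zi: "(if i = p i then 1 else 0) - (if f i = p i then 1 else 0) = (0::complex)" by auto
      from zi that have "\<exists>a\<in>{0..<n}. (if a = p a then 1 else 0) - (if f a = p a then 1 else 0) = (0::complex)"
        by (rule bexI[where x=i])
      then have "(\<Prod>i = 0..<n. (if i = p i then 1 else 0) - (if f i = p i then 1 else 0)) = (0::complex)"
        by (intro prod_zero) auto
      then show False using nz by simp
    qed
    define K where "K = {i \<in> {0..<n}. p i \<noteq> i}"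
    have Ksub: "K \<subseteq> {0..<n}" unfolding K_def by auto
    have "\<exists>x. p x \<noteq> x" using pp(2) by (auto simp: fun_eq_iff)
    then obtain x where x: "p x \<noteq> x" by blast
    then have "x \<in> {0..<n}" using pp(1) unfolding permutes_def by blast
    then have xK: "x \<in> K" using x unfolding K_def by simp
    have cl: "\<forall>y\<in>K. f y \<in> K"
    proof
      fix y assume y: "y \<in> K"
      then have fy: "f y = p y" using fac unfolding K_def by auto
      have "p y \<in> {0..<n}" using y pp(1) unfolding K_def by (simp add: permutes_in_image)
      moreover have "p (p y) \<noteq> p y"
      proof
        assume "p (p y) = p y"
        then have "p y = y" using injD[OF permutes_inj[OF pp(1)]] by blast
        then show False using y unfolding K_def by simp
      qed
      ultimately show "f y \<in> K" using fy unfolding K_def by simp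
    qed
    show False by (rule acycD[OF ac Ksub xK cl])
  qed
  have gid: "?g id = 1"
  proof -
    have "(\<Prod>i = 0..<n. (if i = id i then 1 else 0) - (if f i = id i then 1 else 0)) = (\<Prod>i = 0..<n. 1::complex)"
      using f by (intro prod.cong) auto
    then show ?thesis by (simp add: sign_id)
  qed
  have fin: "finite ?P" by (rule finite_permutations) simp
  have idP: "id \<in> ?P" by (simp add: permutes_id)
  have "det (fmat n f) = sum ?g ?P" by (rule det_fmat_def)
  also have "\<dots> = ?g id + sum ?g (?P - {id})" by (rule sum.remove[OF fin idP])
  also have "sum ?g (?P - {id}) = 0" using z by (intro sum.neutral) blast
  finally show ?thesis using gid by simp
qed

lemma det_fmat_cyc:
  assumes nac: "\<not> acyc n f"
  shows "det (fmat n f) = 0"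
proof -
  define P where "P S \<longleftrightarrow> S \<subseteq> {0..<n} \<and> S \<noteq> {} \<and> (\<forall>x\<in>S. f x \<in> S)" for S
  obtain S0 where "P S0" using nac unfolding acyc_def P_def by blast
  then obtain S where S: "P S" and Smin: "\<forall>S'. P S' \<longrightarrow> card S \<le> card S'"
    using ex_has_least_nat[of P S0 card] by blast
  have Ssub: "S \<subseteq> {0..<n}" and Sne: "S \<noteq> {}" and Scl: "\<forall>x\<in>S. f x \<in> S" using S unfolding P_def by auto
  have finS: "finite S" using Ssub finite_subset by blast
  have fSsub: "f ` S \<subseteq> S" using Scl by auto
  have "P (f ` S)" unfolding P_def using Ssub Sne Scl fSsub by auto
  then have "card S \<le> card (f ` S)" using Smin by blast
  moreover have "card (f ` S) \<le> card S" using finS by (rule card_image_le)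
  ultimately have ceq: "card (f ` S) = card S" by simp
  have fS: "f ` S = S" using card_subset_eq[OF finS fSsub ceq] .
  have inj: "inj_on f S" using eq_card_imp_inj_on[OF finS ceq] .
  define v where "v = vec n (\<lambda>i. if i \<in> S then 1 else 0 :: complex)"
  have vc: "v \<in> carrier_vec n" unfolding v_def by simp
  obtain x where xS: "x \<in> S" using Sne by blast
  then have "x < n" using Ssub by auto
  then have "v $ x = 1" using xS unfolding v_def by simp
  then have v0: "v \<noteq> 0\<^sub>v n" using \<open>x < n\<close> by (metis index_zero_vec(1) zero_neq_one)
  have Av: "transpose_mat (fmat n f) *\<^sub>v v = 0\<^sub>v n"
  proof (rule eq_vecI)
    fix k assume "k < dim_vec (0\<^sub>v n :: complex vec)"
    then have k: "k < n" by simp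
    have "(transpose_mat (fmat n f) *\<^sub>v v) $ k = (\<Sum>i\<in>{0..<n}. ((if i = k then 1 else 0) - (if f i = k then 1 else 0)) * (if i \<in> S then 1 else 0 :: complex))"
      using k by (simp add: fmat_def v_def scalar_prod_def)
    also have "\<dots> = (\<Sum>i\<in>{0..<n}. if i \<in> S then ((if i = k then 1 else 0) - (if f i = k then 1 else 0)) else (0::complex))"
      by (intro sum.cong) auto
    also have "\<dots> = (\<Sum>i\<in>{0..<n} \<inter> S. ((if i = k then 1 else 0) - (if f i = k then 1 else 0) :: complex))"
      by (rule sum.inter_restrict[symmetric]) simp
    also have "\<dots> = (\<Sum>i\<in>S. ((if i = k then 1 else 0) - (if f i = k then 1 else 0) :: complex))"
      using Ssub by (simp add: Int_absorb1)
    also have "\<dots> = (\<Sum>i\<in>S. (if i = k then 1 else 0 :: complex)) - (\<Sum>i\<in>S. (if f i = k then 1 else 0))"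
      by (simp add: sum_subtractf)
    also have "(\<Sum>i\<in>S. (if f i = k then 1 else 0 :: complex)) = (\<Sum>y\<in>f ` S. (if y = k then 1 else 0))"
      by (simp add: sum.reindex[OF inj])
    also have "\<dots> = (\<Sum>i\<in>S. (if i = k then 1 else 0 :: complex))" using fS by simp
    finally show "(transpose_mat (fmat n f) *\<^sub>v v) $ k = 0\<^sub>v n $ k" using k by simp
  qed (simp add: fmat_def)
  have "transpose_mat (fmat n f) \<in> carrier_mat n n" by (simp add: fmat_def)
  then have "det (transpose_mat (fmat n f)) = 0"
    using det_0_iff_vec_prod_zero vc v0 Av by blast
  moreover have "fmat n f \<in> carrier_mat n n" by (simp add: fmat_def)
  ultimately show ?thesis using det_transpose by metis
qed

lemma matrix_tree:
  assumes hE: "\<forall>e\<in>E. \<exists>a b. e = {a, b} \<and> a < Suc n \<and> b < Suc n \<and> a \<noteq> b"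
  shows "det (lapl n E) = of_nat (card {T. spanning_tree {0..<Suc n} E T})"
proof -
  let ?F = "PiE {0..<n} (\<lambda>i. {0..<Suc n} - {i})"
  have "det (lapl n E) = (\<Sum>f\<in>?F. (\<Prod>i = 0..<n. adj E i (f i)) * det (fmat n f))"
    by (rule det_lapl_expand)
  also have "\<dots> = (\<Sum>f\<in>?F. if f \<in> Fs n E then 1 else 0)"
  proof (intro sum.cong refl)
    fix f assume fF: "f \<in> ?F"
    have fne: "\<forall>i<n. f i \<noteq> i" using fF by (auto simp: PiE_iff)
    have pr: "(\<Prod>i = 0..<n. adj E i (f i)) = (if \<forall>i<n. {i, f i} \<in> E then 1 else 0)"
    proof (cases "\<forall>i<n. {i, f i} \<in> E")
      case True
      then have "(\<Prod>i = 0..<n. adj E i (f i)) = (\<Prod>i = 0..<n. 1)" by (intro prod.cong) (auto simp: adj_def)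
      then show ?thesis using True by simp
    next
      case False
      then obtain i where "i < n" "{i, f i} \<notin> E" by auto
      then have z: "(\<Prod>i = 0..<n. adj E i (f i)) = 0" by (intro prod_zero) (auto simp: adj_def)
      show ?thesis unfolding if_not_P[OF False] by (rule z)
    qed
    have dt: "det (fmat n f) = (if acyc n f then 1 else 0)"
      using det_fmat_acyc[OF fne] det_fmat_cyc by auto
    show "(\<Prod>i = 0..<n. adj E i (f i)) * det (fmat n f) = (if f \<in> Fs n E then 1 else 0)"
      using fF unfolding pr dt Fs_def by auto
  qed
  also have "\<dots> = of_nat (card (Fs n E))"
  proof -
    have "Fs n E \<subseteq> ?F" unfolding Fs_def by auto
    then have "?F \<inter> Fs n E = Fs n E" by auto
    moreover have "finite ?F" by (intro finite_PiE) auto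
    ultimately show ?thesis by (simp add: sum.If_cases)
  qed
  also have "\<dots> = of_nat (card {T. spanning_tree {0..<Suc n} E T})"
    using card_spanning_trees_Fs[OF hE] by simp
  finally show ?thesis .
qed



definition nx :: "nat \<Rightarrow> nat \<Rightarrow> nat" where
  "nx N i = (if Suc i = N then 0 else Suc i)"

lemma int_mod_small: "0 \<le> (x::int) \<Longrightarrow> x < N \<Longrightarrow> x mod N = x"
  by simp

lemma int_mod_neg: "- N \<le> (x::int) \<Longrightarrow> x < 0 \<Longrightarrow> x mod N = x + N"
proof -
  assume a: "- N \<le> x" "x < 0"
  have "x mod N = (x + N) mod N" by simp
  also have "\<dots> = x + N" using a by (intro int_mod_small) auto
  finally show ?thesis .
qed

lemma cond1:
  assumes "i < N" "j < N" "2 \<le> N"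
  shows "((int j - int i) mod int N = 1 mod int N) \<longleftrightarrow> j = nx N i"
proof -
  have one: "1 mod int N = 1" using assms by simp
  show ?thesis
  proof (cases "i \<le> j")
    case True
    then have "(int j - int i) mod int N = int j - int i" using assms by (intro int_mod_small) auto
    then show ?thesis using True assms one unfolding nx_def by auto
  next
    case False
    then have "(int j - int i) mod int N = int j - int i + int N" using assms by (intro int_mod_neg) auto
    then show ?thesis using False assms one unfolding nx_def by auto
  qed
qed

lemma cond2:
  assumes "i < N" "j < N" "2 \<le> N"
  shows "((int j - int i) mod int N = (-1) mod int N) \<longleftrightarrow> i = nx N j"
proof -
  have m1: "(-1) mod int N = int N - 1" using assms by (subst int_mod_neg) auto
  show ?thesis
  proof (cases "i \<le> j")
    case True
    then have "(int j - int i) mod int N = int j - int i" using assms by (intro int_mod_small) auto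
    then show ?thesis using True assms m1 unfolding nx_def by auto
  next
    case False
    then have "(int j - int i) mod int N = int j - int i + int N" using assms by (intro int_mod_neg) auto
    then show ?thesis using False assms m1 unfolding nx_def by auto
  qed
qed

lemma GN1_adj:
  assumes "i < N" "j < N" "2 \<le> N"
  shows "{i, j} \<in> GN1_edges N \<longleftrightarrow> i \<noteq> j \<and> j \<noteq> nx N i \<and> i \<noteq> nx N j"
proof
  assume "{i, j} \<in> GN1_edges N"
  then obtain a b where ab: "{i, j} = {a, b}" "a < N" "b < N" "a \<noteq> b"
    "(int b - int a) mod int N \<noteq> 1 mod int N" "(int b - int a) mod int N \<noteq> (-1) mod int N"
    unfolding GN1_edges_def by blast
  then have c: "a \<noteq> b \<and> b \<noteq> nx N a \<and> a \<noteq> nx N b" using cond1 cond2 assms(3) by metis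
  from ab(1) have "(i = a \<and> j = b) \<or> (i = b \<and> j = a)" by (auto simp: doubleton_eq_iff)
  then show "i \<noteq> j \<and> j \<noteq> nx N i \<and> i \<noteq> nx N j" using c by auto
next
  assume c: "i \<noteq> j \<and> j \<noteq> nx N i \<and> i \<noteq> nx N j"
  have "(int j - int i) mod int N \<noteq> 1 mod int N" "(int j - int i) mod int N \<noteq> (-1) mod int N"
    using cond1[OF assms] cond2[OF assms] c by auto
  then show "{i, j} \<in> GN1_edges N" unfolding GN1_edges_def using assms c by blast
qed

lemma GN1_hE: "\<forall>e\<in>GN1_edges (Suc n). \<exists>a b. e = {a, b} \<and> a < Suc n \<and> b < Suc n \<and> a \<noteq> b"
  unfolding GN1_edges_def by blast



lemma mat_mult_entry:
  assumes "M \<in> carrier_mat a b" "P \<in> carrier_mat b c" "i < a" "j < c"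
  shows "(M * P) $$ (i, j) = (\<Sum>k<b. M $$ (i, k) * P $$ (k, j))"
  using assms by (auto simp: scalar_prod_def lessThan_atLeast0 intro!: sum.cong)

lemma sum_delta_mult: "finite S \<Longrightarrow> (\<Sum>k\<in>S. (if i = k then 1 else 0) * g k) = (if i \<in> S then g i else (0::'a::comm_ring_1))"
proof -
  assume "finite S"
  have "(\<Sum>k\<in>S. (if i = k then 1 else 0) * g k) = (\<Sum>k\<in>S. if i = k then g k else 0)"
    by (intro sum.cong) auto
  then show ?thesis using \<open>finite S\<close> by (simp add: sum.delta')
qed

lemma det_J_trick:
  fixes A :: "complex mat"
  assumes A: "A \<in> carrier_mat (Suc n) (Suc n)"
   and rs: "\<forall>i<Suc n. (\<Sum>k<Suc n. A $$ (i,k)) = of_nat (Suc n)"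
   and cs: "\<forall>k<Suc n. (\<Sum>i<Suc n. A $$ (i,k)) = of_nat (Suc n)"
  shows "det A = (of_nat (Suc n))^2 * det (mat n n (\<lambda>(i,k). A $$ (i,k) - 1))"
proof -
  let ?N = "Suc n"
  define s where "s = (of_nat ?N :: complex)"
  have s0: "s \<noteq> 0" unfolding s_def of_nat_eq_0_iff by simp
  define Em where "Em = mat ?N ?N (\<lambda>(i,j). if i = n then 1 else if i = j then 1 else (0::complex))"
  define Fm where "Fm = mat ?N ?N (\<lambda>(i,j). if j = n then 1 else if i = j then 1 else (0::complex))"
  define Gm where "Gm = mat ?N ?N (\<lambda>(i,j). (if i = j then 1 else 0) - (if i < n \<and> j = n then 1 / s else (0::complex)))"
  have Ec: "Em \<in> carrier_mat ?N ?N" and Fc: "Fm \<in> carrier_mat ?N ?N" and Gc: "Gm \<in> carrier_mat ?N ?N"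
    unfolding Em_def Fm_def Gm_def by auto
  have EAc: "Em * A \<in> carrier_mat ?N ?N" using Ec A by auto
  have Bc: "Em * A * Fm \<in> carrier_mat ?N ?N" using EAc Fc by auto
  have EA: "(Em * A) $$ (i,j) = (if i = n then s else A $$ (i,j))" if ij: "i < ?N" "j < ?N" for i j
  proof -
    have "(Em * A) $$ (i,j) = (\<Sum>k<?N. Em $$ (i,k) * A $$ (k,j))" by (rule mat_mult_entry[OF Ec A ij])
    also have "\<dots> = (\<Sum>k<?N. (if i = n then 1 else if i = k then 1 else 0) * A $$ (k,j))"
      using ij by (intro sum.cong) (auto simp: Em_def)
    also have "\<dots> = (if i = n then s else A $$ (i,j))"
    proof (cases "i = n")
      case True then show ?thesis using cs ij by (simp add: s_def)
    next
      case False
      then have "(\<Sum>k<?N. (if i = n then 1 else if i = k then 1 else 0) * A $$ (k,j)) =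
         (\<Sum>k<?N. (if i = k then 1 else 0) * A $$ (k,j))" by simp
      also have "\<dots> = A $$ (i,j)" using ij by (subst sum_delta_mult) auto
      finally show ?thesis using False by simp
    qed
    finally show ?thesis .
  qed
  have B: "(Em * A * Fm) $$ (i,j) = (if i < n \<and> j < n then A $$ (i,j) else if i = n \<and> j = n then s * s else s)"
    if ij: "i < ?N" "j < ?N" for i j
  proof -
    have "(Em * A * Fm) $$ (i,j) = (\<Sum>k<?N. (Em * A) $$ (i,k) * Fm $$ (k,j))" by (rule mat_mult_entry[OF EAc Fc ij])
    also have "\<dots> = (\<Sum>k<?N. (if i = n then s else A $$ (i,k)) * (if j = n then 1 else if k = j then 1 else 0))"
      using ij by (intro sum.cong) (auto simp: Fm_def EA)
    also have "\<dots> = (if i < n \<and> j < n then A $$ (i,j) else if i = n \<and> j = n then s * s else s)"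
    proof (cases "j = n")
      case True
      then show ?thesis using rs ij by (cases "i = n") (auto simp: s_def)
    next
      case False
      then have "(\<Sum>k<?N. (if i = n then s else A $$ (i,k)) * (if j = n then 1 else if k = j then 1 else 0)) =
          (\<Sum>k<?N. (if j = k then 1 else 0) * (if i = n then s else A $$ (i,k)))"
        by (intro sum.cong) auto
      also have "\<dots> = (if i = n then s else A $$ (i,j))" using ij by (subst sum_delta_mult) auto
      finally show ?thesis using False ij by auto
    qed
    finally show ?thesis .
  qed
  have X: "(Gm * (Em * A * Fm)) $$ (i,j) = (if i < n \<and> j < n then A $$ (i,j) - 1 else if i < n then 0 else if j = n then s * s else s)"
    if ij: "i < ?N" "j < ?N" for i j
  proof -
    have "(Gm * (Em * A * Fm)) $$ (i,j) = (\<Sum>k<?N. Gm $$ (i,k) * (Em * A * Fm) $$ (k,j))" by (rule mat_mult_entry[OF Gc Bc ij])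
    also have "\<dots> = (\<Sum>k<?N. ((if i = k then 1 else 0) - (if i < n \<and> k = n then 1 / s else 0)) * (Em * A * Fm) $$ (k,j))"
      using ij by (intro sum.cong) (auto simp: Gm_def)
    also have "\<dots> = (\<Sum>k<?N. (if i = k then 1 else 0) * (Em * A * Fm) $$ (k,j)) - (\<Sum>k<?N. (if n = k then (if i < n then 1 / s else 0) else 0) * (Em * A * Fm) $$ (k,j))"
      by (simp add: left_diff_distrib sum_subtractf)
    also have "\<dots> = (Em * A * Fm) $$ (i,j) - (if i < n then 1 / s else 0) * (Em * A * Fm) $$ (n,j)"
      using ij by (simp add: sum_delta_mult) (auto simp: if_distrib sum.delta less_Suc_eq cong: if_cong)
    also have "\<dots> = (if i < n \<and> j < n then A $$ (i,j) - 1 else if i < n then 0 else if j = n then s * s else s)"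
      using ij s0 by (auto simp: B)
    finally show ?thesis .
  qed
  have dE: "det Em = 1"
  proof -
    have "det Em = prod_list (diag_mat Em)"
      by (rule det_lower_triangular[OF _ Ec]) (auto simp: Em_def)
    also have "\<dots> = (\<Prod>i<?N. Em $$ (i,i))" using Ec by (simp add: prod_list_diag_prod lessThan_atLeast0)
    also have "\<dots> = 1" by (intro prod.neutral) (auto simp: Em_def)
    finally show ?thesis .
  qed
  have dF: "det Fm = 1"
  proof -
    have "det Fm = prod_list (diag_mat Fm)"
      by (rule det_upper_triangular[OF _ Fc]) (auto simp: Fm_def upper_triangular_def)
    also have "\<dots> = (\<Prod>i<?N. Fm $$ (i,i))" using Fc by (simp add: prod_list_diag_prod lessThan_atLeast0)
    also have "\<dots> = 1" by (intro prod.neutral) (auto simp: Fm_def)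
    finally show ?thesis .
  qed
  have dG: "det Gm = 1"
  proof -
    have "det Gm = prod_list (diag_mat Gm)"
      by (rule det_upper_triangular[OF _ Gc]) (auto simp: Gm_def upper_triangular_def)
    also have "\<dots> = (\<Prod>i<?N. Gm $$ (i,i))" using Gc by (simp add: prod_list_diag_prod lessThan_atLeast0)
    also have "\<dots> = 1" by (intro prod.neutral) (auto simp: Gm_def)
    finally show ?thesis .
  qed
  define X where "X = Gm * (Em * A * Fm)"
  have Xc: "X \<in> carrier_mat ?N ?N" unfolding X_def using Gc Bc by auto
  have XX: "X $$ (i,j) = (if i < n \<and> j < n then A $$ (i,j) - 1 else if i < n then 0 else if j = n then s * s else s)"
    if "i < ?N" "j < ?N" for i j unfolding X_def using X[OF that] .
  have "det X = det A"
    unfolding X_def using Gc Bc EAc Ec Fc A dE dF dG by (simp add: det_mult)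
  moreover have "det X = (\<Sum>i<?N. X $$ (i, n) * cofactor X i n)"
    by (rule laplace_expansion_column[OF Xc]) simp
  moreover have "(\<Sum>i<?N. X $$ (i, n) * cofactor X i n) = X $$ (n, n) * cofactor X n n"
  proof -
    have "(\<Sum>i<?N. X $$ (i, n) * cofactor X i n) = (\<Sum>i\<in>{n}. X $$ (i, n) * cofactor X i n)"
      by (rule sum.mono_neutral_right) (auto simp: XX)
    then show ?thesis by simp
  qed
  moreover have "X $$ (n, n) = s * s" by (simp add: XX)
  moreover have "cofactor X n n = det (mat n n (\<lambda>(i,k). A $$ (i,k) - 1))"
  proof -
    have "mat_delete X n n = mat n n (\<lambda>(i,k). A $$ (i,k) - 1)"
      by (rule eq_matI) (use Xc in \<open>auto simp: mat_delete_def XX carrier_matD\<close>)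
    then show ?thesis unfolding cofactor_def by simp
  qed
  ultimately show ?thesis by (simp add: s_def power2_eq_square)
qed



definition pv :: "nat \<Rightarrow> nat \<Rightarrow> nat" where
  "pv N i = (if i = 0 then N - 1 else i - 1)"

lemma nx_lt: "i < N \<Longrightarrow> nx N i < N" unfolding nx_def by auto
lemma pv_lt: "i < N \<Longrightarrow> pv N i < N" unfolding pv_def by auto
lemma nx_pv: "i < N \<Longrightarrow> j < N \<Longrightarrow> (i = nx N j) \<longleftrightarrow> (j = pv N i)"
  unfolding nx_def pv_def by auto
lemma nx_ne: "i < N \<Longrightarrow> 2 \<le> N \<Longrightarrow> nx N i \<noteq> i" unfolding nx_def by auto
lemma pv_ne: "i < N \<Longrightarrow> 2 \<le> N \<Longrightarrow> pv N i \<noteq> i" unfolding pv_def by auto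
lemma nx_ne_pv: "i < N \<Longrightarrow> 3 \<le> N \<Longrightarrow> nx N i \<noteq> pv N i" unfolding nx_def pv_def by auto

definition Cm :: "nat \<Rightarrow> complex mat" where
  "Cm N = mat N N (\<lambda>(i,k). (if i = k then of_nat N - 2 else 0) + (if k = nx N i \<or> i = nx N k then 1 else 0))"

lemma Cm_entry:
  assumes "i < N" "k < N" "3 \<le> N"
  shows "Cm N $$ (i,k) = (if i = k then of_nat N - 2 else 0) + (if k = nx N i then 1 else 0) + (if k = pv N i then 1 else 0)"
  using assms by (auto simp: Cm_def nx_def pv_def)

lemma Cm_entry':
  assumes "i < N" "k < N" "3 \<le> N"
  shows "Cm N $$ (i,k) = (if k = i then of_nat N - 2 else 0) + (if i = pv N k then 1 else 0) + (if i = nx N k then 1 else 0)"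
  using assms by (auto simp: Cm_def nx_def pv_def)

lemma sum_ind: "finite S \<Longrightarrow> (\<Sum>k\<in>S. (if k = a then 1 else 0 :: complex)) = (if a \<in> S then 1 else 0)"
  by (simp add: sum.delta)

lemma Cm_rowsum:
  assumes "i < N" "3 \<le> N"
  shows "(\<Sum>k<N. Cm N $$ (i,k)) = of_nat N"
proof -
  have "(\<Sum>k<N. Cm N $$ (i,k)) = (\<Sum>k<N. (if k = i then of_nat N - 2 else 0) + (if k = nx N i then 1 else 0) + (if k = pv N i then 1 else 0))"
    using assms by (intro sum.cong) (auto simp: Cm_entry)
  also have "\<dots> = (of_nat N - 2) + 1 + 1"
    using assms nx_lt[of i N] pv_lt[of i N] by (simp add: sum.distrib sum.delta)
  finally show ?thesis by simp
qed

lemma Cm_colsum: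
  assumes "k < N" "3 \<le> N"
  shows "(\<Sum>i<N. Cm N $$ (i,k)) = of_nat N"
proof -
  have "(\<Sum>i<N. Cm N $$ (i,k)) = (\<Sum>i<N. (if i = k then of_nat N - 2 else 0) + (if i = pv N k then 1 else 0) + (if i = nx N k then 1 else 0))"
    using assms by (intro sum.cong) (auto simp: Cm_entry')
  also have "\<dots> = (of_nat N - 2) + 1 + 1"
    using assms nx_lt[of k N] pv_lt[of k N] by (simp add: sum.distrib sum.delta)
  finally show ?thesis by simp
qed

lemma adj_GN1:
  assumes "i < N" "j < N" "3 \<le> N"
  shows "adj (GN1_edges N) i j = (if j = i then 0 else 1 - (if j = nx N i then 1 else 0) - (if j = pv N i then 1 else 0))"
  using assms GN1_adj[of i N j] nx_pv[of i N j] nx_ne_pv[of i N] nx_ne[of i N] pv_ne[of i N]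
  by (auto simp: adj_def)

lemma lapl_GN1:
  assumes "2 \<le> n"
  shows "lapl n (GN1_edges (Suc n)) = mat n n (\<lambda>(i,k). Cm (Suc n) $$ (i,k) - 1)"
proof (rule eq_matI)
  let ?N = "Suc n"
  let ?E = "GN1_edges ?N"
  fix i k assume ik: "i < dim_row (mat n n (\<lambda>(i,k). Cm (Suc n) $$ (i,k) - 1))"
    "k < dim_col (mat n n (\<lambda>(i,k). Cm (Suc n) $$ (i,k) - 1))"
  then have i: "i < n" and k: "k < n" by auto
  have N3: "3 \<le> ?N" using assms by simp
  let ?V = "{0..<?N} - {i}"
  have fin: "finite ?V" by simp
  have a: "adj ?E i j = 1 - (if j = nx ?N i then 1 else 0) - (if j = pv ?N i then 1 else 0)" if "j \<in> ?V" for j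
    using that adj_GN1[of i ?N j] i N3 by auto
  have inV: "nx ?N i \<in> ?V" "pv ?N i \<in> ?V"
    using i nx_lt[of i ?N] pv_lt[of i ?N] nx_ne[of i ?N] pv_ne[of i ?N] by auto
  have "lapl n ?E $$ (i,k) = (\<Sum>j\<in>?V. adj ?E i j * ((if i = k then 1 else 0) - (if j = k then 1 else 0)))"
    using i k by (simp add: lapl_def)
  also have "\<dots> = (\<Sum>j\<in>?V. (1 - (if j = nx ?N i then 1 else 0) - (if j = pv ?N i then 1 else 0)) * ((if i = k then 1 else 0) - (if j = k then 1 else 0)))"
    using a by (intro sum.cong) auto
  also have "\<dots> = Cm ?N $$ (i,k) - 1"
  proof (cases "i = k")
    case True
    then have "(\<Sum>j\<in>?V. (1 - (if j = nx ?N i then 1 else 0) - (if j = pv ?N i then 1 else 0)) * ((if i = k then 1 else 0) - (if j = k then 1 else 0)))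
       = (\<Sum>j\<in>?V. (1 - (if j = nx ?N i then 1 else 0) - (if j = pv ?N i then 1 else (0::complex))))"
      by (intro sum.cong) auto
    also have "\<dots> = of_nat (card ?V) - 1 - 1"
      using inV by (simp add: sum_subtractf sum.delta)
    also have "card ?V = n" using i by simp
    finally show ?thesis using True i N3 Cm_entry[of i ?N i] nx_ne[of i ?N] pv_ne[of i ?N] by simp
  next
    case False
    then have "(\<Sum>j\<in>?V. (1 - (if j = nx ?N i then 1 else 0) - (if j = pv ?N i then 1 else 0)) * ((if i = k then 1 else 0) - (if j = k then 1 else 0)))
       = (\<Sum>j\<in>?V. (if j = k then - (1 - (if j = nx ?N i then 1 else 0) - (if j = pv ?N i then 1 else (0::complex))) else 0))"
      by (intro sum.cong) auto
    also have "\<dots> = - (1 - (if k = nx ?N i then 1 else 0) - (if k = pv ?N i then 1 else (0::complex)))"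
      using False k by (simp add: sum.delta)
    finally show ?thesis using False i k N3 Cm_entry[of i ?N k] by simp
  qed
  finally show "lapl n ?E $$ (i,k) = mat n n (\<lambda>(i,k). Cm (Suc n) $$ (i,k) - 1) $$ (i,k)"
    using i k by simp
qed (simp_all add: lapl_def)

lemma det_Cm_lapl:
  assumes "2 \<le> n"
  shows "det (Cm (Suc n)) = (of_nat (Suc n))^2 * det (lapl n (GN1_edges (Suc n)))"
proof -
  have N3: "3 \<le> Suc n" using assms by simp
  have "det (Cm (Suc n)) = (of_nat (Suc n))^2 * det (mat n n (\<lambda>(i,k). Cm (Suc n) $$ (i,k) - 1))"
  proof (rule det_J_trick)
    show "Cm (Suc n) \<in> carrier_mat (Suc n) (Suc n)" by (simp add: Cm_def)
    show "\<forall>i<Suc n. (\<Sum>k<Suc n. Cm (Suc n) $$ (i, k)) = of_nat (Suc n)" using Cm_rowsum[OF _ N3] by blast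
    show "\<forall>k<Suc n. (\<Sum>i<Suc n. Cm (Suc n) $$ (i, k)) = of_nat (Suc n)" using Cm_colsum[OF _ N3] by blast
  qed
  then show ?thesis using lapl_GN1[OF assms] by simp
qed



definition om :: "nat \<Rightarrow> complex" where "om N = cis (2 * pi / real N)"

lemma om_pow: "om N ^ m = cis (2 * pi * real m / real N)"
  unfolding om_def DeMoivre by (simp add: mult_ac)

lemma om_N: "0 < N \<Longrightarrow> om N ^ N = 1"
  unfolding om_pow by simp

lemma om_mod: "0 < N \<Longrightarrow> om N ^ m = om N ^ (m mod N)"
proof -
  assume N: "0 < N"
  have "om N ^ m = om N ^ (m mod N + N * (m div N))" by simp
  also have "\<dots> = om N ^ (m mod N)" by (simp only: power_add power_mult om_N[OF N]) simp
  finally show ?thesis .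
qed

lemma om_eq1: "0 < N \<Longrightarrow> om N ^ m = 1 \<longleftrightarrow> N dvd m"
proof
  assume N: "0 < N" and h: "om N ^ m = 1"
  have inj: "inj_on (\<lambda>k. cis (2 * pi * real k / real N)) {..<N}"
    using bij_betw_roots_unity[OF N] by (simp add: bij_betw_def)
  have "cis (2 * pi * real (m mod N) / real N) = cis (2 * pi * real 0 / real N)"
    using h om_mod[OF N, of m] unfolding om_pow by simp
  then have "(\<lambda>k. cis (2 * pi * real k / real N)) (m mod N) = (\<lambda>k. cis (2 * pi * real k / real N)) 0"
    by simp
  then have "m mod N = 0" by (rule inj_onD[OF inj]) (use N in auto)
  then show "N dvd m" by auto
next
  assume N: "0 < N" and "N dvd m"
  then obtain q where "m = N * q" by auto
  then show "om N ^ m = 1" using om_N[OF N] by (simp add: power_mult)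
qed

lemma dvd_diag:
  fixes i k N :: nat
  assumes "i < N" "k < N" "N dvd (i + (N - 1) * k)"
  shows "i = k"
proof (rule ccontr)
  assume ne: "i \<noteq> k"
  have N: "1 \<le> N" using assms(1) by linarith
  have e: "i + (N - 1) * k + k = i + N * k" using N by (cases N) (auto simp: algebra_simps)
  have "int (i + (N - 1) * k) + int k = int i + int N * int k"
    using arg_cong[OF e, of int] by simp
  then have "int (i + (N - 1) * k) = (int i - int k) + int N * int k" by linarith
  then have "int N dvd (int i - int k) + int N * int k" using assms(3) by (metis int_dvd_int_iff)
  then have d: "int N dvd (int i - int k)" by (simp add: dvd_add_left_iff)
  have "int i - int k \<noteq> 0" using ne by simp
  then have "\<bar>int N\<bar> \<le> \<bar>int i - int k\<bar>" using d by (rule dvd_imp_le_int)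
  then show False using assms(1,2) by linarith
qed

definition Wm :: "nat \<Rightarrow> complex mat" where
  "Wm N = mat N N (\<lambda>(j,k). om N ^ (j * k))"

definition Wm' :: "nat \<Rightarrow> complex mat" where
  "Wm' N = mat N N (\<lambda>(j,k). om N ^ ((N - 1) * j * k))"

lemma Wm_inv: assumes N: "0 < N" shows "Wm N * Wm' N = of_nat N \<cdot>\<^sub>m 1\<^sub>m N"
proof (rule eq_matI)
  fix i k assume "i < dim_row (of_nat N \<cdot>\<^sub>m 1\<^sub>m N :: complex mat)" "k < dim_col (of_nat N \<cdot>\<^sub>m 1\<^sub>m N :: complex mat)"
  then have i: "i < N" and k: "k < N" by auto
  define z where "z = om N ^ (i + (N - 1) * k)"
  have "(Wm N * Wm' N) $$ (i,k) = (\<Sum>l<N. Wm N $$ (i,l) * Wm' N $$ (l,k))"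
    by (rule mat_mult_entry[OF _ _ i k]) (auto simp: Wm_def Wm'_def)
  also have "\<dots> = (\<Sum>l<N. z ^ l)"
  proof (intro sum.cong refl)
    fix l assume "l \<in> {..<N}"
    then have "Wm N $$ (i,l) * Wm' N $$ (l,k) = om N ^ (i * l) * om N ^ ((N - 1) * l * k)"
      using i k by (simp add: Wm_def Wm'_def)
    also have "\<dots> = om N ^ ((i + (N - 1) * k) * l)" by (simp add: power_add[symmetric] algebra_simps)
    also have "\<dots> = z ^ l" unfolding z_def by (simp add: power_mult)
    finally show "Wm N $$ (i,l) * Wm' N $$ (l,k) = z ^ l" .
  qed
  also have "\<dots> = (of_nat N \<cdot>\<^sub>m 1\<^sub>m N) $$ (i,k)"
  proof (cases "i = k")
    case True
    have "i + (N - 1) * i = N * i" using N by (cases N) auto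
    then have "z = 1" unfolding z_def using True om_N[OF N] by (simp add: power_mult)
    then show ?thesis using True i by simp
  next
    case False
    have "z \<noteq> 1" unfolding z_def using om_eq1[OF N] dvd_diag[OF i k] False by blast
    moreover have "z ^ N = 1" unfolding z_def using om_N[OF N]
      by (metis power_mult mult.commute power_one)
    ultimately have "(\<Sum>l<N. z ^ l) = 0" by (simp add: geometric_sum)
    then show ?thesis using False i k by simp
  qed
  finally show "(Wm N * Wm' N) $$ (i,k) = (of_nat N \<cdot>\<^sub>m 1\<^sub>m N) $$ (i,k)" .
qed (auto simp: Wm_def Wm'_def)

lemma det_Wm_nz: assumes N: "0 < N" shows "det (Wm N) \<noteq> 0"
proof
  assume h: "det (Wm N) = 0"
  have "det (Wm N) * det (Wm' N) = det (Wm N * Wm' N)"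
    by (rule det_mult[symmetric]) (auto simp: Wm_def Wm'_def)
  also have "\<dots> = det (of_nat N \<cdot>\<^sub>m 1\<^sub>m N)" by (simp only: Wm_inv[OF N])
  also have "\<dots> = of_nat N ^ N" by simp
  finally have "det (Wm N) * det (Wm' N) = of_nat N ^ N" .
  moreover have "(of_nat N :: complex) ^ N \<noteq> 0" using N by simp
  ultimately show False using h by (metis mult_zero_left)
qed

definition dd :: "nat \<Rightarrow> nat \<Rightarrow> complex" where
  "dd N k = of_nat N - 2 + om N ^ k + om N ^ ((N - 1) * k)"

lemma om_nx: assumes "j < N" shows "om N ^ (nx N j * k) = om N ^ (j * k) * om N ^ k"
proof (cases "Suc j = N")
  case True
  have "om N ^ (j * k) * om N ^ k = om N ^ (Suc j * k)" by (simp add: power_add[symmetric] algebra_simps)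
  also have "\<dots> = om N ^ (N * k)" using True by simp
  also have "\<dots> = 1" using om_N[of N] True by (simp add: power_mult)
  finally show ?thesis using True by (simp add: nx_def)
next
  case False
  then show ?thesis by (simp add: nx_def power_add[symmetric] algebra_simps)
qed

lemma om_pv: assumes "j < N" shows "om N ^ (pv N j * k) = om N ^ (j * k) * om N ^ ((N - 1) * k)"
proof (cases "j = 0")
  case True then show ?thesis by (simp add: pv_def)
next
  case False
  have N: "0 < N" using assms by simp
  have "om N ^ (j * k) * om N ^ ((N - 1) * k) = om N ^ ((j - 1) * k + N * k)"
  proof -
    have "j * k + (N - 1) * k = (j - 1) * k + N * k" using False N
      by (cases j; cases N) (auto simp: algebra_simps)
    then show ?thesis by (simp add: power_add[symmetric])
  qed
  also have "\<dots> = om N ^ ((j - 1) * k)" using om_N[OF N] by (simp add: power_add power_mult)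
  finally show ?thesis using False by (simp add: pv_def)
qed

lemma det_Cm_prod:
  assumes N3: "3 \<le> N"
  shows "det (Cm N) = (\<Prod>k<N. dd N k)"
proof -
  have N: "0 < N" using N3 by simp
  have N2: "2 \<le> N" using N3 by simp
  define Dm where "Dm = mat N N (\<lambda>(j,k). if j = k then dd N k else 0)"
  have Cc: "Cm N \<in> carrier_mat N N" by (simp add: Cm_def)
  have Wc: "Wm N \<in> carrier_mat N N" by (simp add: Wm_def)
  have Dc: "Dm \<in> carrier_mat N N" by (simp add: Dm_def)
  have CW: "Cm N * Wm N = Wm N * Dm"
  proof (rule eq_matI)
    fix j k assume "j < dim_row (Wm N * Dm)" "k < dim_col (Wm N * Dm)"
    then have j: "j < N" and k: "k < N" using Wc Dc by auto
    have "(Cm N * Wm N) $$ (j,k) = (\<Sum>l<N. Cm N $$ (j,l) * Wm N $$ (l,k))"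
      by (rule mat_mult_entry[OF Cc Wc j k])
    also have "\<dots> = (\<Sum>l<N. ((if j = l then of_nat N - 2 else 0) + (if l = nx N j then 1 else 0) + (if l = pv N j then 1 else 0)) * om N ^ (l * k))"
      using j k N3 by (intro sum.cong) (auto simp: Cm_entry Wm_def)
    also have "\<dots> = (\<Sum>l<N. (if l = j then (of_nat N - 2) * om N ^ (l * k) else 0)) + (\<Sum>l<N. if l = nx N j then om N ^ (l * k) else 0) + (\<Sum>l<N. if l = pv N j then om N ^ (l * k) else 0)"
      unfolding sum.distrib[symmetric] using nx_ne[OF j N2] pv_ne[OF j N2] nx_ne_pv[OF j N3]
      by (intro sum.cong) (auto simp: distrib_right)
    also have "\<dots> = (of_nat N - 2) * om N ^ (j * k) + om N ^ (nx N j * k) + om N ^ (pv N j * k)"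
      using j nx_lt[OF j] pv_lt[OF j] not_sym[OF nx_ne[OF j N2]] not_sym[OF pv_ne[OF j N2]]
      by (simp add: sum.delta)
    also have "\<dots> = om N ^ (j * k) * dd N k"
      unfolding om_nx[OF j] om_pv[OF j] dd_def by (simp add: algebra_simps)
    also have "\<dots> = (Wm N * Dm) $$ (j,k)"
    proof -
      have "(Wm N * Dm) $$ (j,k) = (\<Sum>l<N. Wm N $$ (j,l) * Dm $$ (l,k))"
        by (rule mat_mult_entry[OF Wc Dc j k])
      also have "\<dots> = (\<Sum>l<N. (if l = k then om N ^ (j * k) * dd N k else 0))"
        using j k by (intro sum.cong) (auto simp: Wm_def Dm_def)
      also have "\<dots> = om N ^ (j * k) * dd N k" using k by simp
      finally show ?thesis by simp
    qed
    finally show "(Cm N * Wm N) $$ (j,k) = (Wm N * Dm) $$ (j,k)" .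
  qed (use Cc Wc Dc in auto)
  have "det (Cm N) * det (Wm N) = det (Wm N) * det Dm"
    using CW det_mult[OF Cc Wc] det_mult[OF Wc Dc] by (metis mult.commute)
  then have "det (Cm N) = det Dm" using det_Wm_nz[OF N] by simp
  also have "det Dm = prod_list (diag_mat Dm)"
    by (rule det_upper_triangular[OF _ Dc]) (auto simp: Dm_def upper_triangular_def)
  also have "\<dots> = (\<Prod>k<N. Dm $$ (k,k))" using Dc by (simp add: prod_list_diag_prod lessThan_atLeast0)
  also have "\<dots> = (\<Prod>k<N. dd N k)" by (intro prod.cong) (auto simp: Dm_def)
  finally show ?thesis .
qed



lemma prod_roots:
  assumes N: "0 < N"
  shows "(\<Prod>k<N. (x - om N ^ k)) = x ^ N - 1"
proof -
  define p :: "complex poly" where "p = [:-1:] + monom 1 N"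
  have dm: "degree (monom (1::complex) N) = N" by (simp add: degree_monom_eq)
  have lc: "lead_coeff p = 1" unfolding p_def using N dm by (subst lead_coeff_add_le) auto
  have pp: "poly p z = z ^ N - 1" for z unfolding p_def by (simp add: poly_monom)
  have pd: "poly (pderiv p) z = of_nat N * z ^ (N - 1)" for z
    unfolding p_def by (simp add: pderiv_add pderiv_monom poly_monom pderiv_pCons)
  have rsq: "rsquarefree p"
    unfolding rsquarefree_roots
  proof (intro allI notI)
    fix a assume h: "poly p a = 0 \<and> poly (pderiv p) a = 0"
    then have "a ^ N = 1" using pp by simp
    then have "a \<noteq> 0" using N by (cases N) auto
    then have "poly (pderiv p) a \<noteq> 0" using N pd by simp
    then show False using h by simp
  qed
  have "smult (lead_coeff p) (\<Prod>z | poly p z = 0. [:-z, 1:]) = p"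
    by (rule complex_poly_decompose_rsquarefree[OF rsq])
  then have "poly p x = poly (\<Prod>z | poly p z = 0. [:-z, 1:]) x" using lc by (metis smult_1_left)
  also have "\<dots> = (\<Prod>z | poly p z = 0. x - z)" by (simp add: poly_prod)
  also have "{z. poly p z = 0} = {z. z ^ N = 1}" using pp by simp
  also have "(\<Prod>z\<in>{z. z ^ N = 1}. x - z) = (\<Prod>k<N. x - cis (2 * pi * real k / real N))"
    by (rule prod.reindex_bij_betw[OF bij_betw_roots_unity[OF N], symmetric])
  also have "\<dots> = (\<Prod>k<N. x - om N ^ k)" by (simp add: om_pow)
  finally show ?thesis using pp by simp
qed

lemma prod_neg: "(\<Prod>k\<in>A. - f k) = (-1) ^ card A * (\<Prod>k\<in>A. f k :: complex)"
proof -
  have "(\<Prod>k\<in>A. - f k) = (\<Prod>k\<in>A. (-1) * f k)" by simp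
  also have "\<dots> = (\<Prod>k\<in>A. (-1::complex)) * (\<Prod>k\<in>A. f k)" by (rule prod.distrib)
  finally show ?thesis by simp
qed

lemma prod_rho1:
  assumes "odd N"
  shows "(\<Prod>k<N. (r + om N ^ k)) = r ^ N + 1"
proof -
  have N: "0 < N" using assms by (cases N) auto
  have "(\<Prod>k<N. (- r - om N ^ k)) = (- r) ^ N - 1" by (rule prod_roots[OF N])
  moreover have "(\<Prod>k<N. (- r - om N ^ k)) = (-1) ^ N * (\<Prod>k<N. (r + om N ^ k))"
    using prod_neg[of "\<lambda>k. r + om N ^ k" "{..<N}"] by simp
  ultimately have "(-1) ^ N * (\<Prod>k<N. (r + om N ^ k)) = (- r) ^ N - 1" by simp
  then have h: "- (\<Prod>k<N. (r + om N ^ k)) = - (r ^ N) - 1" using assms by simp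
  then have "(\<Prod>k<N. (r + om N ^ k)) = - (- (r ^ N) - 1)" by (metis minus_minus)
  then show ?thesis by simp
qed

lemma om_conj:
  assumes N: "0 < N"
  shows "om N ^ ((N - 1) * k) = cnj (om N ^ k)"
proof -
  have "real ((N - 1) * k) = real N * real k - real k" using N by (simp add: of_nat_diff algebra_simps)
  then have e: "2 * pi * real ((N - 1) * k) / real N = - (2 * pi * real k / real N) + 2 * pi * real k"
    using N by (simp add: field_simps)
  have "om N ^ ((N - 1) * k) = cis (- (2 * pi * real k / real N)) * cis (2 * pi * real k)"
    unfolding om_pow e cis_mult ..
  also have "cis (2 * pi * real k) = cis (2 * pi) ^ k" by (simp add: DeMoivre mult_ac)
  also have "\<dots> = 1" by simp
  finally show ?thesis by (simp add: om_pow cis_cnj)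
qed

lemma prod_rho2:
  assumes "odd N"
  shows "(\<Prod>k<N. (complex_of_real r + om N ^ ((N - 1) * k))) = complex_of_real r ^ N + 1"
proof -
  have N: "0 < N" using assms by (cases N) auto
  have "(\<Prod>k<N. (complex_of_real r + om N ^ ((N - 1) * k))) = (\<Prod>k<N. cnj (complex_of_real r + om N ^ k))"
    by (intro prod.cong refl) (subst om_conj[OF N], simp)
  also have "\<dots> = cnj (\<Prod>k<N. (complex_of_real r + om N ^ k))" by simp
  also have "\<dots> = cnj (complex_of_real r ^ N + 1)" using prod_rho1[OF assms] by simp
  also have "\<dots> = complex_of_real r ^ N + 1" by simp
  finally show ?thesis .
qed

lemma prod_dd:
  assumes "odd N" and rq: "r ^ 2 - (real N - 2) * r + 1 = 0" and r0: "r \<noteq> 0"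
  shows "(\<Prod>k<N. dd N k) = (complex_of_real r ^ N + 1) ^ 2 / complex_of_real r ^ N"
proof -
  have N: "0 < N" using assms by (cases N) auto
  define c where "c = complex_of_real r"
  have c0: "c \<noteq> 0" using r0 by (simp add: c_def)
  have cq: "c ^ 2 + 1 = (of_nat N - 2) * c"
  proof -
    have "complex_of_real (r ^ 2 - (real N - 2) * r + 1) = 0" using rq by simp
    then show ?thesis unfolding c_def by (simp add: algebra_simps)
  qed
  have one: "om N ^ k * om N ^ ((N - 1) * k) = 1" for k
  proof -
    have "k + (N - 1) * k = N * k" using N by (cases N) auto
    then have "om N ^ k * om N ^ ((N - 1) * k) = om N ^ (N * k)" by (simp add: power_add[symmetric])
    also have "\<dots> = 1" using om_N[OF N] by (simp add: power_mult)
    finally show ?thesis .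
  qed
  have fac: "dd N k * c = (c + om N ^ k) * (c + om N ^ ((N - 1) * k))" for k
  proof -
    have "(c + om N ^ k) * (c + om N ^ ((N - 1) * k)) = c ^ 2 + c * (om N ^ k + om N ^ ((N - 1) * k)) + om N ^ k * om N ^ ((N - 1) * k)"
      by (simp add: algebra_simps power2_eq_square)
    also have "\<dots> = (of_nat N - 2) * c + c * (om N ^ k + om N ^ ((N - 1) * k))"
      using one[of k] cq by (simp add: algebra_simps)
    also have "\<dots> = dd N k * c" unfolding dd_def by (simp add: algebra_simps)
    finally show ?thesis by simp
  qed
  have "(\<Prod>k<N. dd N k) * c ^ N = (\<Prod>k<N. dd N k * c)" by (simp add: prod.distrib)
  also have "\<dots> = (\<Prod>k<N. (c + om N ^ k)) * (\<Prod>k<N. (c + om N ^ ((N - 1) * k)))"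
    unfolding fac by (simp add: prod.distrib)
  also have "\<dots> = (c ^ N + 1) ^ 2" using prod_rho1[OF assms(1)] prod_rho2[OF assms(1)] unfolding c_def
    by (simp add: power2_eq_square)
  finally have "(\<Prod>k<N. dd N k) * c ^ N = (c ^ N + 1) ^ 2" .
  then show ?thesis using c0 unfolding c_def[symmetric] by (simp add: field_simps)
qed


lemma aux_div: "(x::complex) * m = y \<Longrightarrow> m \<noteq> 0 \<Longrightarrow> x = y / m"
  by (simp add: eq_divide_eq)

theorem theorem4p2:
  fixes N :: nat
  assumes "odd N" and "N \<ge> 5"
  defines "\<Delta> \<equiv> sqrt (real N * (real N - 4))"
  defines "\<rho> \<equiv> (real N - 2 + \<Delta>) / 2"
  shows "real (num_spanning_trees (GN1_vertices N) (GN1_edges N)) =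
           (1 / real N) * ((\<rho> ^ N + 1)\<^sup>2 / (\<rho> ^ (N - 1) * (\<rho> + 1)\<^sup>2))"
proof -
  define n where "n = N - 1"
  have Nn: "N = Suc n" using assms(2) unfolding n_def by simp
  have n2: "2 \<le> n" using assms(2) unfolding n_def by simp
  have N3: "3 \<le> N" using assms(2) by simp
  let ?E = "GN1_edges N"
  let ?c = "num_spanning_trees (GN1_vertices N) ?E"
  have "?c = card {T. spanning_tree {0..<Suc n} ?E T}"
    unfolding num_spanning_trees_def GN1_vertices_def Nn ..
  then have C: "complex_of_nat ?c = det (lapl n ?E)"
    using matrix_tree[OF GN1_hE[of n]] Nn by simp
  have C2: "det (Cm N) = of_nat N ^ 2 * det (lapl n ?E)" using det_Cm_lapl[OF n2] Nn by simp
  have C3: "det (Cm N) = (\<Prod>k<N. dd N k)" by (rule det_Cm_prod[OF N3])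
  have NN: "real N \<ge> 5" using assms(2) by simp
  have D2: "\<Delta> ^ 2 = real N * (real N - 4)" unfolding \<Delta>_def using NN by simp
  have D0: "\<Delta> \<ge> 0" unfolding \<Delta>_def using NN by simp
  have r0: "\<rho> > 0" unfolding \<rho>_def using NN D0 by simp
  have rq: "\<rho> ^ 2 - (real N - 2) * \<rho> + 1 = 0"
  proof -
    have r2: "2 * \<rho> = real N - 2 + \<Delta>" unfolding \<rho>_def by simp
    have "4 * (\<rho> ^ 2 - (real N - 2) * \<rho> + 1) = (2 * \<rho>) ^ 2 - 2 * (real N - 2) * (2 * \<rho>) + 4"
      by (simp add: power2_eq_square algebra_simps)
    also have "\<dots> = (real N - 2 + \<Delta>) ^ 2 - 2 * (real N - 2) * (real N - 2 + \<Delta>) + 4" unfolding r2 ..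
    also have "\<dots> = \<Delta> ^ 2 - (real N - 2) ^ 2 + 4" by (simp add: power2_eq_square algebra_simps)
    also have "\<dots> = 0" using D2 by (simp add: power2_eq_square algebra_simps)
    finally show ?thesis by simp
  qed
  have C4: "(\<Prod>k<N. dd N k) = (complex_of_real \<rho> ^ N + 1) ^ 2 / complex_of_real \<rho> ^ N"
    by (rule prod_dd[OF assms(1) rq]) (use r0 in simp)
  have "complex_of_nat ?c = complex_of_real ((\<rho> ^ N + 1) ^ 2 / \<rho> ^ N / real N ^ 2)"
  proof -
    have "complex_of_nat ?c * of_nat N ^ 2 = (complex_of_real \<rho> ^ N + 1) ^ 2 / complex_of_real \<rho> ^ N"
      using C C2 C3 C4 by (simp add: mult.commute)
    moreover have "(of_nat N :: complex) ^ 2 \<noteq> 0" using NN by simp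
    ultimately have e1: "complex_of_nat ?c = ((complex_of_real \<rho> ^ N + 1) ^ 2 / complex_of_real \<rho> ^ N) / of_nat N ^ 2"
      by (rule aux_div)
    moreover have "complex_of_real ((\<rho> ^ N + 1) ^ 2 / \<rho> ^ N / real N ^ 2) = ((complex_of_real \<rho> ^ N + 1) ^ 2 / complex_of_real \<rho> ^ N) / of_nat N ^ 2"
      by simp
    ultimately show ?thesis by (rule trans[OF _ sym])
  qed
  then have R: "real ?c = (\<rho> ^ N + 1) ^ 2 / \<rho> ^ N / real N ^ 2"
    by (metis of_real_eq_iff of_real_of_nat_eq)
  have sq: "(\<rho> + 1) ^ 2 = real N * \<rho>" using rq by (simp add: power2_eq_square algebra_simps)
  have pw: "\<rho> ^ (N - 1) * \<rho> = \<rho> ^ N" using Nn by simp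
  have "(1 / real N) * ((\<rho> ^ N + 1)\<^sup>2 / (\<rho> ^ (N - 1) * (\<rho> + 1)\<^sup>2)) = (\<rho> ^ N + 1) ^ 2 / \<rho> ^ N / real N ^ 2"
    using r0 NN unfolding sq by (simp add: field_simps pw[symmetric] power2_eq_square)
  then show ?thesis by (rule trans[OF R sym])
qed

end
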